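(* Let $a\neq0$ and $b\in\mathbb R$, and let $A\in\{X,Y\}$. Suppose $\psi,p$ satisfy $\dot\psi=A\psi$, $\dot p=-A^{\top}p$ for $t\ge0$ with reduced data $(\phi_1,\phi_2,\phi_3)(0)=(0,a,b)$, and let $\tau_A>0$ be the smallest positive zero of $\phi_1$. Then $(\phi_1,\phi_2,\phi_3)(\tau_A)=(0,-a,b)$, for both $A=X$ and $A=Y$. That is, the shortest switching-to-switching $X$-arc and the shortest switching-to-switching $Y$-arc induce the same map $(0,a,b)\mapsto(0,-a,b)$ on reduced data.
   Context: Fix $\gamma\in(0,\pi/2)$, $s=\sin\gamma$, $c=\cos\gamma$, and $X=\begin{pmatrix}0&s^2&sc\\-s^2&0&0\\-sc&0&0\end{pmatrix}$, $Y=\begin{pmatrix}0&1&0\\-1&0&0\\0&0&0\end{pmatrix}$. Let $F_1=X-Y$, $F_2=[X,Y]$, $F_3=[Y,[X,Y]]$ and define the reduced variables $\phi_i(t)=\langle p(t),F_i\psi(t)\rangle$, $i=1,2,3$, with the standard inner product on $\mathbb R^3$. *)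

theory Defs
  imports "HOL-Analysis.Analysis"
begin

definition Xmat :: "real \<Rightarrow> real^3^3" where
  "Xmat \<gamma> = (let s = sin \<gamma>; c = cos \<gamma> in
     vector [vector [0, s^2, s*c], vector [-(s^2), 0, 0], vector [-(s*c), 0, 0]])"

definition Ymat :: "real^3^3" where
  "Ymat = vector [vector [0, 1, 0], vector [-1, 0, 0], vector [0, 0, 0]]"

definition mcomm :: "real^3^3 \<Rightarrow> real^3^3 \<Rightarrow> real^3^3" where
  "mcomm A B = A ** B - B ** A"

definition F1 :: "real \<Rightarrow> real^3^3" where "F1 \<gamma> = Xmat \<gamma> - Ymat"
definition F2 :: "real \<Rightarrow> real^3^3" where "F2 \<gamma> = mcomm (Xmat \<gamma>) Ymat"
definition F3 :: "real \<Rightarrow> real^3^3" where "F3 \<gamma> = mcomm Ymat (mcomm (Xmat \<gamma>) Ymat)"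

definition phi1 :: "real \<Rightarrow> (real \<Rightarrow> real^3) \<Rightarrow> (real \<Rightarrow> real^3) \<Rightarrow> real \<Rightarrow> real" where
  "phi1 \<gamma> p \<psi> t = p t \<bullet> (F1 \<gamma> *v \<psi> t)"
definition phi2 :: "real \<Rightarrow> (real \<Rightarrow> real^3) \<Rightarrow> (real \<Rightarrow> real^3) \<Rightarrow> real \<Rightarrow> real" where
  "phi2 \<gamma> p \<psi> t = p t \<bullet> (F2 \<gamma> *v \<psi> t)"
definition phi3 :: "real \<Rightarrow> (real \<Rightarrow> real^3) \<Rightarrow> (real \<Rightarrow> real^3) \<Rightarrow> real \<Rightarrow> real" where
  "phi3 \<gamma> p \<psi> t = p t \<bullet> (F3 \<gamma> *v \<psi> t)"

end

theory Submission
  imports Defs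
begin


lemma phi_deriv:
  fixes A F :: "real^3^3" and p psi :: "real \<Rightarrow> real^3"
  assumes dpsi: "(psi has_vector_derivative (A *v psi t)) (at t within S)"
    and dp: "(p has_vector_derivative (- (transpose A *v p t))) (at t within S)"
  shows "((\<lambda>t. p t \<bullet> (F *v psi t)) has_real_derivative (p t \<bullet> ((F ** A - A ** F) *v psi t))) (at t within S)"
proof -
  have l: "bounded_linear (\<lambda>x::real^3. F *v x)" using matrix_vector_mul_bounded_linear[of F] by simp
  have d1: "((\<lambda>t. F *v psi t) has_vector_derivative (F *v (A *v psi t))) (at t within S)"
    using bounded_linear.has_vector_derivative[OF l dpsi] .
  have "((\<lambda>t. p t \<bullet> (F *v psi t)) has_derivative (\<lambda>h. p t \<bullet> (h *\<^sub>R (F *v (A *v psi t))) + (h *\<^sub>R (- (transpose A *v p t))) \<bullet> (F *v psi t))) (at t within S)"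
    using has_derivative_inner[OF dp[unfolded has_vector_derivative_def] d1[unfolded has_vector_derivative_def]] .
  moreover have "(\<lambda>h. p t \<bullet> (h *\<^sub>R (F *v (A *v psi t))) + (h *\<^sub>R (- (transpose A *v p t))) \<bullet> (F *v psi t)) = (\<lambda>h. (p t \<bullet> ((F ** A - A ** F) *v psi t)) * h)"
    by (auto simp: inner_diff_right matrix_vector_mul_assoc[symmetric] matrix_vector_mult_diff_rdistrib dot_lmul_matrix algebra_simps)
  ultimately show ?thesis unfolding has_field_derivative_def by simp
qed

lemmas msimps = vec_eq_iff forall_3 matrix_matrix_mult_def sum_3 Xmat_def Ymat_def F1_def F2_def F3_def mcomm_def Let_def

lemma cY3: "F3 g ** Ymat - Ymat ** F3 g = F2 g"
  by (simp add: msimps algebra_simps)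
lemma cX2: "F2 g ** Xmat g - Xmat g ** F2 g = (- ((sin g)^2)) *\<^sub>R F1 g"
proof -
  have e: "cos g * cos g = 1 - sin g * sin g" using sin_cos_squared_add[of g] by (simp add: power2_eq_square)
  have e2: "cos g * (cos g * (sin g * sin g)) + sin g * (sin g * (sin g * sin g)) = sin g * sin g"
  proof -
    have "cos g * (cos g * (sin g * sin g)) + sin g * (sin g * (sin g * sin g)) = (sin g * sin g) * (cos g * cos g + sin g * sin g)"
      by algebra
    also have "\<dots> = sin g * sin g" using e by simp
    finally show ?thesis .
  qed
  show ?thesis by (simp add: msimps algebra_simps power2_eq_square e2)
qed
lemma cX3: "F3 g ** Xmat g - Xmat g ** F3 g = ((sin g)^2) *\<^sub>R F2 g"
  by (simp add: msimps algebra_simps power2_eq_square) 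
lemma cX1: "F1 g ** Xmat g - Xmat g ** F1 g = F2 g"
  by (simp add: msimps algebra_simps power2_eq_square) 
lemma cY1: "F1 g ** Ymat - Ymat ** F1 g = F2 g"
  by (simp add: msimps algebra_simps power2_eq_square) 
lemma cY2: "F2 g ** Ymat - Ymat ** F2 g = - F3 g"
  by (simp add: msimps algebra_simps power2_eq_square) 
lemma sc: "p \<bullet> ((c *\<^sub>R M) *v x) = c * (p \<bullet> (M *v x))" for M :: "real^3^3"
  by (simp add: inner_vec_def matrix_vector_mult_def sum_3 algebra_simps)


lemma const_on:
  fixes g :: "real \<Rightarrow> real"
  assumes "\<And>t. t \<ge> 0 \<Longrightarrow> (g has_real_derivative 0) (at t within {0..})" "t \<ge> 0"
  shows "g t = g 0"
proof -
  obtain c where "\<forall>x\<in>{0..}. g x = c"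
    using has_field_derivative_zero_constant[of "{0..}" g] assms(1) by (auto simp: convex_real_interval)
  then show ?thesis using assms(2) by auto
qed

lemma Ycase:
  fixes f1 f2 f3 :: "real \<Rightarrow> real"
  assumes d1: "\<And>t. t \<ge> 0 \<Longrightarrow> (f1 has_real_derivative f2 t) (at t within {0..})"
    and d2: "\<And>t. t \<ge> 0 \<Longrightarrow> (f2 has_real_derivative - f3 t) (at t within {0..})"
    and d3: "\<And>t. t \<ge> 0 \<Longrightarrow> (f3 has_real_derivative f2 t) (at t within {0..})"
    and i: "f1 0 = 0" "f2 0 = a" "f3 0 = b" and t: "t \<ge> 0"
  shows "f2 t = a * cos t - b * sin t \<and> f3 t = a * sin t + b * cos t \<and> f1 t = f3 t - b"
proof -
  have g: "(\<lambda>t. f2 t * cos t + f3 t * sin t) t = (\<lambda>t. f2 t * cos t + f3 t * sin t) 0"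
    by (rule const_on[OF _ t]) (auto intro!: derivative_eq_intros d2 d3 simp: algebra_simps)
  have h: "(\<lambda>t. f3 t * cos t - f2 t * sin t) t = (\<lambda>t. f3 t * cos t - f2 t * sin t) 0"
    by (rule const_on[OF _ t]) (auto intro!: derivative_eq_intros d2 d3 simp: algebra_simps)
  have k: "(\<lambda>t. f1 t - f3 t) t = (\<lambda>t. f1 t - f3 t) 0"
    by (rule const_on[OF _ t]) (auto intro!: derivative_eq_intros d1 d3 simp: algebra_simps)
  have g': "f2 t * cos t + f3 t * sin t = a" and h': "f3 t * cos t - f2 t * sin t = b"
    using g h i by auto
  have sc: "sin t ^ 2 + cos t ^ 2 = 1" by simp
  have "(f2 t * cos t + f3 t * sin t) * cos t - (f3 t * cos t - f2 t * sin t) * sin t = f2 t * (sin t ^ 2 + cos t ^ 2)"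
    by algebra
  then have "f2 t = (f2 t * cos t + f3 t * sin t) * cos t - (f3 t * cos t - f2 t * sin t) * sin t" using sc by simp
  moreover have "(f2 t * cos t + f3 t * sin t) * sin t + (f3 t * cos t - f2 t * sin t) * cos t = f3 t * (sin t ^ 2 + cos t ^ 2)"
    by algebra
  then have "f3 t = (f2 t * cos t + f3 t * sin t) * sin t + (f3 t * cos t - f2 t * sin t) * cos t" using sc by simp
  ultimately show ?thesis using g' h' k i by auto
qed

lemma Xcase:
  fixes f1 f2 f3 :: "real \<Rightarrow> real" and s :: real
  assumes s: "s > 0"
    and d1: "\<And>t. t \<ge> 0 \<Longrightarrow> (f1 has_real_derivative f2 t) (at t within {0..})"
    and d2: "\<And>t. t \<ge> 0 \<Longrightarrow> (f2 has_real_derivative - (s^2) * f1 t) (at t within {0..})"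
    and d3: "\<And>t. t \<ge> 0 \<Longrightarrow> (f3 has_real_derivative s^2 * f2 t) (at t within {0..})"
    and i: "f1 0 = 0" "f2 0 = a" "f3 0 = b" and t: "t \<ge> 0"
  shows "s * f1 t = a * sin (s*t) \<and> f2 t = a * cos (s*t) \<and> f3 t = b + s^2 * f1 t"
proof -
  have g: "(\<lambda>t. s * f1 t * sin (s*t) + f2 t * cos (s*t)) t = (\<lambda>t. s * f1 t * sin (s*t) + f2 t * cos (s*t)) 0"
    by (rule const_on[OF _ t]) (auto intro!: derivative_eq_intros d1 d2 simp: algebra_simps power2_eq_square)
  have h: "(\<lambda>t. s * f1 t * cos (s*t) - f2 t * sin (s*t)) t = (\<lambda>t. s * f1 t * cos (s*t) - f2 t * sin (s*t)) 0"
    by (rule const_on[OF _ t]) (auto intro!: derivative_eq_intros d1 d2 simp: algebra_simps power2_eq_square)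
  have k: "(\<lambda>t. f3 t - s^2 * f1 t) t = (\<lambda>t. f3 t - s^2 * f1 t) 0"
    by (rule const_on[OF _ t]) (auto intro!: derivative_eq_intros d1 d3 simp: algebra_simps)
  have g': "s * f1 t * sin (s*t) + f2 t * cos (s*t) = a" and h': "s * f1 t * cos (s*t) - f2 t * sin (s*t) = 0"
    using g h i by auto
  have sc: "sin (s*t) ^ 2 + cos (s*t) ^ 2 = 1" by simp
  have "(s * f1 t * sin (s*t) + f2 t * cos (s*t)) * sin (s*t) + (s * f1 t * cos (s*t) - f2 t * sin (s*t)) * cos (s*t) = s * f1 t * (sin (s*t) ^ 2 + cos (s*t) ^ 2)"
    by algebra
  then have "s * f1 t = (s * f1 t * sin (s*t) + f2 t * cos (s*t)) * sin (s*t) + (s * f1 t * cos (s*t) - f2 t * sin (s*t)) * cos (s*t)" using sc by simp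
  moreover have "(s * f1 t * sin (s*t) + f2 t * cos (s*t)) * cos (s*t) - (s * f1 t * cos (s*t) - f2 t * sin (s*t)) * sin (s*t) = f2 t * (sin (s*t) ^ 2 + cos (s*t) ^ 2)"
    by algebra
  then have "f2 t = (s * f1 t * sin (s*t) + f2 t * cos (s*t)) * cos (s*t) - (s * f1 t * cos (s*t) - f2 t * sin (s*t)) * sin (s*t)" using sc by simp
  ultimately show ?thesis using g' h' k i by auto
qed

lemma ngl: "p \<bullet> ((- M) *v x) = - (p \<bullet> (M *v x))" for M :: "real^3^3"
  by (simp add: inner_vec_def matrix_vector_mult_def sum_3 algebra_simps)

lemma Yfinal:
  fixes a b \<tau> :: real
  assumes a: "a \<noteq> 0" and tau: "\<tau> > 0" and z: "a * sin \<tau> + b * cos \<tau> - b = 0"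
    and m: "\<And>t. 0 < t \<Longrightarrow> t < \<tau> \<Longrightarrow> a * sin t + b * cos t - b \<noteq> 0"
  shows "a * cos \<tau> - b * sin \<tau> = - a"
proof -
  have half: "a * sin (2 * v) + b * cos (2 * v) - b = 2 * sin v * (a * cos v - b * sin v)" for v :: real
    unfolding sin_double cos_double_sin by (simp add: algebra_simps power2_eq_square)
  define u where "u = \<tau> / 2"
  have tu: "\<tau> = 2 * u" and u0: "u > 0" using tau by (auto simp: u_def)
  have "sin u * (a * cos u - b * sin u) = 0" using z half[of u] tu by simp
  moreover have "sin u \<noteq> 0"
  proof
    assume su: "sin u = 0"
    have upi: "u \<ge> pi"
    proof (rule ccontr)
      assume "\<not> u \<ge> pi"
      then have "sin u > 0" using u0 by (intro sin_gt_zero) auto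
      with su show False by simp
    qed
    define k where "k v = a * cos v - b * sin v" for v
    have ck: "continuous_on {0..pi} k" unfolding k_def by (intro continuous_intros)
    have "\<exists>v. 0 \<le> v \<and> v \<le> pi \<and> k v = 0"
    proof (cases "a > 0")
      case True
      then show ?thesis using IVT2'[of k pi 0 0, OF _ _ _ ck] by (simp add: k_def)
    next
      case False
      then have "a < 0" using a by simp
      then show ?thesis using IVT'[of k 0 0 pi, OF _ _ _ ck] by (simp add: k_def)
    qed
    then obtain v where v: "0 \<le> v" "v \<le> pi" "k v = 0" by blast
    have "v \<noteq> 0" "v \<noteq> pi" using v(3) a by (auto simp: k_def)
    then have "0 < 2 * v" "2 * v < \<tau>" using v(1,2) upi tu by auto
    moreover have "a * sin (2 * v) + b * cos (2 * v) - b = 0" using half[of v] v(3) by (simp add: k_def)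
    ultimately show False using m by blast
  qed
  ultimately have e: "a * cos u = b * sin u" by simp
  have "a * cos \<tau> - b * sin \<tau> = a * (cos u ^ 2 - sin u ^ 2) - 2 * sin u * (b * sin u) * 0 - 2 * sin u * (a * cos u) * 0 - 2 * cos u * (b * sin u)"
    unfolding tu sin_double cos_double by (simp add: algebra_simps)
  also have "\<dots> = a * (cos u ^ 2 - sin u ^ 2) - 2 * cos u * (a * cos u)" by (simp add: e)
  also have "\<dots> = - a * (sin u ^ 2 + cos u ^ 2)" by algebra
  also have "\<dots> = - a" by simp
  finally show ?thesis .
qed

lemma Xfinal:
  fixes a s \<tau> :: real and f1 :: "real \<Rightarrow> real"
  assumes s: "s > 0" and tau: "\<tau> > 0" and z: "sin (s * \<tau>) = 0"
    and f: "\<And>t. t \<ge> 0 \<Longrightarrow> s * f1 t = a * sin (s * t)"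
    and m: "\<And>t. 0 < t \<Longrightarrow> t < \<tau> \<Longrightarrow> f1 t \<noteq> 0"
  shows "cos (s * \<tau>) = -1"
proof -
  obtain i :: int where i: "s * \<tau> = of_int i * pi" using z sin_zero_iff_int2 by blast
  have "of_int i * pi > 0" using i s tau by (metis mult_pos_pos)
  then have i0: "i > 0" by (simp add: zero_less_mult_iff)
  have "i = 1"
  proof (rule ccontr)
    assume "i \<noteq> 1"
    then have "i \<ge> 2" using i0 by simp
    then have "pi < of_int i * pi" by simp
    then have "pi / s < \<tau>" using i s by (simp add: divide_less_eq mult.commute)
    moreover have "pi / s > 0" using s by simp
    moreover have "s * f1 (pi / s) = 0" using f[of "pi / s"] s by simp
    ultimately show False using m s by auto
  qed
  then show ?thesis using i by simp
qed

theorem mainTheorem8: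
  fixes \<gamma> a b \<tau> :: real and A :: "real^3^3" and \<psi> p :: "real \<Rightarrow> real^3"
  assumes "0 < \<gamma>" "\<gamma> < pi / 2"
    and "a \<noteq> 0"
    and "A \<in> {Xmat \<gamma>, Ymat}"
    and "\<And>t. t \<ge> 0 \<Longrightarrow> (\<psi> has_vector_derivative (A *v \<psi> t)) (at t within {0..})"
    and "\<And>t. t \<ge> 0 \<Longrightarrow> (p has_vector_derivative (- (transpose A *v p t))) (at t within {0..})"
    and "phi1 \<gamma> p \<psi> 0 = 0" "phi2 \<gamma> p \<psi> 0 = a" "phi3 \<gamma> p \<psi> 0 = b"
    and "0 < \<tau>" "phi1 \<gamma> p \<psi> \<tau> = 0"
    and "\<And>t. 0 < t \<Longrightarrow> t < \<tau> \<Longrightarrow> phi1 \<gamma> p \<psi> t \<noteq> 0"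
  shows "phi1 \<gamma> p \<psi> \<tau> = 0 \<and> phi2 \<gamma> p \<psi> \<tau> = - a \<and> phi3 \<gamma> p \<psi> \<tau> = b"
proof -
  have D: "\<And>F t. t \<ge> 0 \<Longrightarrow> ((\<lambda>t. p t \<bullet> (F *v \<psi> t)) has_real_derivative p t \<bullet> ((F ** A - A ** F) *v \<psi> t)) (at t within {0..})"
    using phi_deriv assms(5,6) by blast
  have e1: "phi1 \<gamma> p \<psi> = (\<lambda>t. p t \<bullet> (F1 \<gamma> *v \<psi> t))" by (rule ext) (simp add: phi1_def)
  have e2: "phi2 \<gamma> p \<psi> = (\<lambda>t. p t \<bullet> (F2 \<gamma> *v \<psi> t))" by (rule ext) (simp add: phi2_def)
  have e3: "phi3 \<gamma> p \<psi> = (\<lambda>t. p t \<bullet> (F3 \<gamma> *v \<psi> t))" by (rule ext) (simp add: phi3_def)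
  show ?thesis
  proof (cases "A = Ymat")
    case True
    have d1: "\<And>t. t \<ge> 0 \<Longrightarrow> (phi1 \<gamma> p \<psi> has_real_derivative phi2 \<gamma> p \<psi> t) (at t within {0..})"
      using D[of _ "F1 \<gamma>"] by (simp add: e1 phi2_def cY1 True)
    have d2: "\<And>t. t \<ge> 0 \<Longrightarrow> (phi2 \<gamma> p \<psi> has_real_derivative - phi3 \<gamma> p \<psi> t) (at t within {0..})"
      using D[of _ "F2 \<gamma>"] by (simp add: e2 phi3_def cY2 ngl True)
    have d3: "\<And>t. t \<ge> 0 \<Longrightarrow> (phi3 \<gamma> p \<psi> has_real_derivative phi2 \<gamma> p \<psi> t) (at t within {0..})"
      using D[of _ "F3 \<gamma>"] by (simp add: e3 phi2_def cY3 True)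
    have Y: "\<And>t. t \<ge> 0 \<Longrightarrow> phi2 \<gamma> p \<psi> t = a * cos t - b * sin t \<and> phi3 \<gamma> p \<psi> t = a * sin t + b * cos t \<and> phi1 \<gamma> p \<psi> t = phi3 \<gamma> p \<psi> t - b"
      using Ycase[OF d1 d2 d3 assms(7,8,9)] by blast
    have z: "a * sin \<tau> + b * cos \<tau> - b = 0" using Y[of \<tau>] assms(10,11) by simp
    have m: "\<And>t. 0 < t \<Longrightarrow> t < \<tau> \<Longrightarrow> a * sin t + b * cos t - b \<noteq> 0"
      using Y assms(12) by (metis less_eq_real_def)
    have "a * cos \<tau> - b * sin \<tau> = - a" using Yfinal[OF assms(3,10) z m] .
    then show ?thesis using Y[of \<tau>] assms(10,11) by simp
  next
    case False
    then have AX: "A = Xmat \<gamma>" using assms(4) by simp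
    define s where "s = sin \<gamma>"
    have s0: "s > 0" unfolding s_def using assms(1,2) by (intro sin_gt_zero) auto
    have d1: "\<And>t. t \<ge> 0 \<Longrightarrow> (phi1 \<gamma> p \<psi> has_real_derivative phi2 \<gamma> p \<psi> t) (at t within {0..})"
      using D[of _ "F1 \<gamma>"] by (simp add: e1 phi2_def cX1 AX)
    have d2: "\<And>t. t \<ge> 0 \<Longrightarrow> (phi2 \<gamma> p \<psi> has_real_derivative - (s^2) * phi1 \<gamma> p \<psi> t) (at t within {0..})"
      using D[of _ "F2 \<gamma>"] by (simp add: e2 phi1_def cX2 sc ngl AX s_def)
    have d3: "\<And>t. t \<ge> 0 \<Longrightarrow> (phi3 \<gamma> p \<psi> has_real_derivative s^2 * phi2 \<gamma> p \<psi> t) (at t within {0..})"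
      using D[of _ "F3 \<gamma>"] by (simp add: e3 phi2_def cX3 sc AX s_def)
    have X: "\<And>t. t \<ge> 0 \<Longrightarrow> s * phi1 \<gamma> p \<psi> t = a * sin (s*t) \<and> phi2 \<gamma> p \<psi> t = a * cos (s*t) \<and> phi3 \<gamma> p \<psi> t = b + s^2 * phi1 \<gamma> p \<psi> t"
      using Xcase[OF s0 d1 d2 d3 assms(7,8,9)] by blast
    have z: "sin (s * \<tau>) = 0" using X[of \<tau>] assms(3,10,11) by simp
    have "cos (s * \<tau>) = -1"
      using Xfinal[OF s0 assms(10) z, of "phi1 \<gamma> p \<psi>"] X assms(12) by blast
    then show ?thesis using X[of \<tau>] assms(10,11) by simp
  qed
qed

end
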